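(* Consider the slotted transmission system and transmission policy $P$ described in the context, with loss probability $p\in(0,1)$, feedback delay $d\ge0$ and threshold $\gamma>0$. Suppose that $|\hat{Q}^r_k-Q^r_k|\le\delta$ for all $k$ and some $\delta\ge0$, and that there is $\epsilon>0$ with $E[S_k\mid\hat{Q}^r_k]\ge\epsilon$ whenever $\hat{Q}^r_k\le\gamma$. Let $\hat{S}_k:=1-C_k$ (so $S_k\le\hat{S}_k$) and $\hat{s}_k:=\frac1k\sum_{i=1}^k\hat{S}_i$. Then, as $k\to\infty$, $$E[\hat{s}_k]\ge(1-p)-\frac{\tfrac12+\delta+(1+\delta)(1-p)}{\gamma}.$$
   Context: Time is slotted, slots $k=1,2,\dots$; each slot carries at most one packet transmission over a lossy path. Information packets arrive at the transmitter according to $A_k\in\{0,1\}$ and are held in a transmitter queue $Q^t_{k+1}=[Q^t_k+A_k-S_k]^+$, $Q^t_1=0$, where $[x]^+=\max\{x,0\}$. In slot $k$, $S_k\in\{0,1\}$ indicates that an information packet is sent and $C_k\in\{0,1\}$ indicates that a coded packet is sent ($S_k+C_k\le1$). Erasures: $X_k=1$ if the packet sent in slot $k$ is erased and $0$ otherwise; $\{X_k\}$ is i.i.d. with $\Pr(X_k=1)=p$, independent of the transmitter's decisions and queue state up to slot $k$. The virtual receiver queue evolves as $Q^r_{k+1}=[Q^r_k+S_kX_k-C_k(1-X_k)]^+$ (non-negative integer valued). Feedback reaches the transmitter with delay $d$ slots, so in slot $k$ the transmitter knows $Q^r_{k-d}$ (quantities with non-positive indices are given initial values). The estimator is $\hat{Q}^r_k=Q^r_{k-d}+\sum_{j=k-d}^{k-1}(S_jp-C_j(1-p))$.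 Transmission policy $P$ with parameter $\gamma$: $C_k\in\arg\min_{C\in\{0,1\}}(-\hat{Q}^r_k+\gamma)C$ and $S_k=\min\{Q^t_k+A_k,\,1-C_k\}$. Expectations are over the arrival and loss processes. *)

theory Defs
  imports "HOL-Probability.Probability"
begin

text \<open>Time slots are indexed by integers; slots k \<ge> 1 are the operating slots,
  slots k \<le> 0 (and Q^r_1) carry given deterministic initial values.\<close>

definition Qhat :: "nat \<Rightarrow> real \<Rightarrow> (int \<Rightarrow> 'a \<Rightarrow> nat) \<Rightarrow> (int \<Rightarrow> 'a \<Rightarrow> nat)
    \<Rightarrow> (int \<Rightarrow> 'a \<Rightarrow> nat) \<Rightarrow> int \<Rightarrow> 'a \<Rightarrow> real" where
  "Qhat d p Qr S C k \<omega> =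
     real (Qr (k - int d) \<omega>) +
     (\<Sum>j\<in>{k - int d..k - 1}. real (S j \<omega>) * p - real (C j \<omega>) * (1 - p))"

text \<open>The information available up to slot k: decisions and queue states in slots j \<le> k
  and losses in slots j < k (sigma-algebra generated by them, as a set of events).\<close>
definition hist_events :: "'a measure \<Rightarrow> (int \<Rightarrow> 'a \<Rightarrow> nat) \<Rightarrow> (int \<Rightarrow> 'a \<Rightarrow> nat)
    \<Rightarrow> (int \<Rightarrow> 'a \<Rightarrow> nat) \<Rightarrow> (int \<Rightarrow> 'a \<Rightarrow> nat) \<Rightarrow> (int \<Rightarrow> 'a \<Rightarrow> nat) \<Rightarrow> int \<Rightarrow> 'a set set" where
  "hist_events M S C Qt Qr X k =
     sigma_sets (space M)
       ((\<Union>j\<in>{..k}. \<Union>V\<in>{S j, C j, Qt j, Qr j}. {V -` B \<inter> space M | B. True})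
        \<union> (\<Union>j\<in>{..<k}. {X j -` B \<inter> space M | B. True}))"

definition gen_alg :: "'a measure \<Rightarrow> ('a \<Rightarrow> real) \<Rightarrow> 'a measure" where
  "gen_alg M Y = vimage_algebra (space M) Y borel"

end

theory Submission
  imports Defs
begin

lemma E_prod01:
  assumes "prob_space M"
    and fm: "f \<in> measurable M (count_space UNIV)" and gm: "g \<in> measurable M (count_space UNIV)"
    and v: "\<And>\<omega>. \<omega> \<in> space M \<Longrightarrow> f \<omega> \<in> {0,1::nat} \<and> g \<omega> \<in> {0,1::nat}"
    and ind: "prob_space.prob M ({\<omega>\<in>space M. f \<omega> = 1} \<inter> {\<omega>\<in>space M. g \<omega> = 1})
      = prob_space.prob M {\<omega>\<in>space M. f \<omega> = 1} * prob_space.prob M {\<omega>\<in>space M. g \<omega> = 1}"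
  shows "prob_space.expectation M (\<lambda>\<omega>. real (f \<omega>) * real (g \<omega>))
       = prob_space.expectation M (\<lambda>\<omega>. real (f \<omega>)) * prob_space.expectation M (\<lambda>\<omega>. real (g \<omega>))"
proof -
  interpret P: prob_space M by fact
  have "P.expectation (\<lambda>\<omega>. real (f \<omega>) * real (g \<omega>))
      = P.expectation (indicator ({\<omega>\<in>space M. f \<omega> = 1} \<inter> {\<omega>\<in>space M. g \<omega> = 1}))"
    by (rule Bochner_Integration.integral_cong) (auto dest!: v simp: indicator_def)
  moreover have "P.expectation (\<lambda>\<omega>. real (f \<omega>)) = P.expectation (indicator {\<omega>\<in>space M. f \<omega> = 1})"
    by (rule Bochner_Integration.integral_cong) (auto dest!: v simp: indicator_def)
  moreover have "P.expectation (\<lambda>\<omega>. real (g \<omega>)) = P.expectation (indicator {\<omega>\<in>space M. g \<omega> = 1})"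
    by (rule Bochner_Integration.integral_cong) (auto dest!: v simp: indicator_def)
  moreover have ie: "P.expectation (indicator {\<omega>\<in>space M. Q \<omega>}) = P.prob {\<omega>\<in>space M. Q \<omega>}" for Q
  proof -
    have "P.expectation (indicator {\<omega>\<in>space M. Q \<omega>}) = measure M ({\<omega>\<in>space M. Q \<omega>} \<inter> space M)"
      by (rule Bochner_Integration.integral_indicator)
    also have "{\<omega>\<in>space M. Q \<omega>} \<inter> space M = {\<omega>\<in>space M. Q \<omega>}" by auto
    finally show ?thesis .
  qed
  moreover have "{\<omega>\<in>space M. f \<omega> = 1} \<inter> {\<omega>\<in>space M. g \<omega> = 1} = {\<omega>\<in>space M. f \<omega> = 1 \<and> g \<omega> = 1}" by auto
  ultimately show ?thesis using ind
    by (simp only: ie)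
qed

theorem theorem2:
  fixes M :: "'a measure"
    and A X S C Qt Qr :: "int \<Rightarrow> 'a \<Rightarrow> nat"
    and p \<gamma> \<delta> :: real and d :: nat
    and s0 c0 r0 :: "int \<Rightarrow> nat"
  assumes "prob_space M"
    and p: "0 < p" "p < 1" and gam: "\<gamma> > 0" and del: "\<delta> \<ge> 0"
    and meas: "\<And>k. A k \<in> measurable M (count_space UNIV)"
      "\<And>k. X k \<in> measurable M (count_space UNIV)"
      "\<And>k. S k \<in> measurable M (count_space UNIV)"
      "\<And>k. C k \<in> measurable M (count_space UNIV)"
      "\<And>k. Qt k \<in> measurable M (count_space UNIV)"
      "\<And>k. Qr k \<in> measurable M (count_space UNIV)"
    \<comment> \<open>given deterministic initial values\<close>
    and init: "\<And>k \<omega>. k \<le> 0 \<Longrightarrow> \<omega> \<in> space M \<Longrightarrow> S k \<omega> = s0 k \<and> C k \<omega> = c0 k"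
      "\<And>k \<omega>. k \<le> 1 \<Longrightarrow> \<omega> \<in> space M \<Longrightarrow> Qr k \<omega> = r0 k"
      "\<And>\<omega>. \<omega> \<in> space M \<Longrightarrow> Qt 1 \<omega> = 0"
    \<comment> \<open>arrivals and erasures are 0/1 valued\<close>
    and AX01: "\<And>k \<omega>. k \<ge> 1 \<Longrightarrow> \<omega> \<in> space M \<Longrightarrow> A k \<omega> \<in> {0, 1} \<and> X k \<omega> \<in> {0, 1}"
    \<comment> \<open>erasures: Bernoulli(p), independent of the past losses, decisions and queue states up to slot k\<close>
    and Xdist: "\<And>k. k \<ge> 1 \<Longrightarrow> prob_space.prob M {\<omega> \<in> space M. X k \<omega> = 1} = p"
    and Xindep: "\<And>k. k \<ge> 1 \<Longrightarrow> prob_space.indep_set M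
        (sigma_sets (space M) {X k -` B \<inter> space M | B. True}) (hist_events M S C Qt Qr X k)"
    \<comment> \<open>queue dynamics\<close>
    and Qt_step: "\<And>k \<omega>. k \<ge> 1 \<Longrightarrow> \<omega> \<in> space M \<Longrightarrow> Qt (k + 1) \<omega> = (Qt k \<omega> + A k \<omega>) - S k \<omega>"
    and Qr_step: "\<And>k \<omega>. k \<ge> 1 \<Longrightarrow> \<omega> \<in> space M \<Longrightarrow>
        Qr (k + 1) \<omega> = nat (int (Qr k \<omega>) + int (S k \<omega> * X k \<omega>) - int (C k \<omega> * (1 - X k \<omega>)))"
    \<comment> \<open>policy P with parameter gamma\<close>
    and C_pol: "\<And>k \<omega>. k \<ge> 1 \<Longrightarrow> \<omega> \<in> space M \<Longrightarrow> C k \<omega> \<in> {0, 1} \<and>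
        (\<forall>c\<in>{0::nat, 1}. (- Qhat d p Qr S C k \<omega> + \<gamma>) * real (C k \<omega>) \<le> (- Qhat d p Qr S C k \<omega> + \<gamma>) * real c)"
    and S_pol: "\<And>k \<omega>. k \<ge> 1 \<Longrightarrow> \<omega> \<in> space M \<Longrightarrow> S k \<omega> = min (Qt k \<omega> + A k \<omega>) (1 - C k \<omega>)"
    \<comment> \<open>hypotheses of the theorem\<close>
    and est: "\<And>k \<omega>. k \<ge> 1 \<Longrightarrow> \<omega> \<in> space M \<Longrightarrow> \<bar>Qhat d p Qr S C k \<omega> - real (Qr k \<omega>)\<bar> \<le> \<delta>"
    and eps: "\<exists>\<epsilon>>0. \<forall>k\<ge>1. AE \<omega> in M. Qhat d p Qr S C k \<omega> \<le> \<gamma> \<longrightarrow>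
        real_cond_exp M (gen_alg M (Qhat d p Qr S C k)) (\<lambda>\<omega>. real (S k \<omega>)) \<omega> \<ge> \<epsilon>"
  shows "liminf (\<lambda>k::nat. ereal (prob_space.expectation M
            (\<lambda>\<omega>. (\<Sum>i\<in>{1..int k}. 1 - real (C i \<omega>)) / real k)))
         \<ge> ereal ((1 - p) - (1/2 + \<delta> + (1 + \<delta>) * (1 - p)) / \<gamma>)"
proof -
  interpret P: prob_space M by fact
  define t where "t = (1 - p) - (1/2 + \<delta> + (1 + \<delta>) * (1 - p)) / \<gamma>"
  define g where "g = (1/2 + \<delta> + (1 + \<delta>) * (1 - p)) / \<gamma>"
  have "(1 + \<delta>) * (1 - p) \<ge> 0" using p del by simp
  then have "0 < 1/2 + \<delta> + (1 + \<delta>) * (1 - p)" using del by linarith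
  then have gpos: "g > 0" unfolding g_def using gam by (intro divide_pos_pos) auto
  have t_g: "t = 1 - p - g" unfolding t_def g_def by simp
  define val where "val k = P.expectation (\<lambda>\<omega>. (\<Sum>i\<in>{1..int k}. 1 - real (C i \<omega>)) / real k)" for k
  have rm: "(\<lambda>\<omega>. real (V \<omega>)) \<in> borel_measurable M" if "V \<in> measurable M (count_space UNIV)" for V :: "'a \<Rightarrow> nat"
    by (rule measurable_compose[OF that borel_measurable_count_space])
  have C01: "C i \<omega> \<in> {0,1}" if "i \<ge> 1" "\<omega> \<in> space M" for i \<omega> using C_pol[OF that] by blast
  have SC: "S i \<omega> + C i \<omega> \<le> 1" if "i \<ge> 1" "\<omega> \<in> space M" for i \<omega>
    using S_pol[OF that] C01[OF that] by auto
  have X01: "X i \<omega> \<in> {0,1}" if "i \<ge> 1" "\<omega> \<in> space M" for i \<omega> using AX01[OF that] by blast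
  have intC: "integrable M (\<lambda>\<omega>. real (C i \<omega>))" if "i \<ge> 1" for i
  proof (rule P.integrable_const_bound[where B=1])
    show "AE \<omega> in M. norm (real (C i \<omega>)) \<le> 1"
      by (intro AE_I2) (use C01[OF that] in force)
  qed (use rm[OF meas(4)] in auto)
  have intS: "integrable M (\<lambda>\<omega>. real (S i \<omega>))" if "i \<ge> 1" for i
  proof (rule P.integrable_const_bound[where B=1])
    show "AE \<omega> in M. norm (real (S i \<omega>)) \<le> 1"
      by (intro AE_I2) (use SC[OF that] in force)
  qed (use rm[OF meas(3)] in auto)
  have intSX: "integrable M (\<lambda>\<omega>. real (S i \<omega>) * real (X i \<omega>))" if "i \<ge> 1" for i
  proof (rule P.integrable_const_bound[where B=1])
    show "AE \<omega> in M. norm (real (S i \<omega>) * real (X i \<omega>)) \<le> 1"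
      by (intro AE_I2) (use SC[OF that] X01[OF that] in force)
  qed (use rm[OF meas(3)] rm[OF meas(2)] in auto)
  have intCX: "integrable M (\<lambda>\<omega>. real (C i \<omega>) * real (X i \<omega>))" if "i \<ge> 1" for i
  proof (rule P.integrable_const_bound[where B=1])
    show "AE \<omega> in M. norm (real (C i \<omega>) * real (X i \<omega>)) \<le> 1"
      by (intro AE_I2) (use C01[OF that] X01[OF that] in force)
  qed (use rm[OF meas(4)] rm[OF meas(2)] in auto)
  have Xev: "{\<omega>\<in>space M. X i \<omega> = 1} \<in> sigma_sets (space M) {X i -` B \<inter> space M | B. True}" for i
  proof -
    have "{\<omega>\<in>space M. X i \<omega> = 1} = X i -` {1} \<inter> space M" by auto
    then show ?thesis by (auto intro!: sigma_sets.Basic)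
  qed
  have Hev: "{\<omega>\<in>space M. V \<omega> = 1} \<in> hist_events M S C Qt Qr X i" if "V = S i \<or> V = C i" for i V
  proof -
    have "{\<omega>\<in>space M. V \<omega> = 1} = V -` {1} \<inter> space M" by auto
    then show ?thesis unfolding hist_events_def using that
      by (intro sigma_sets.Basic) blast
  qed
  have EX: "P.expectation (\<lambda>\<omega>. real (X i \<omega>)) = p" if "i \<ge> 1" for i
  proof -
    have "P.expectation (\<lambda>\<omega>. real (X i \<omega>)) = P.expectation (indicator {\<omega>\<in>space M. X i \<omega> = 1})"
      by (rule Bochner_Integration.integral_cong) (auto dest!: X01[OF that] simp: indicator_def)
    then show ?thesis using Xdist[OF that] by (simp add: Int_absorb2)
  qed
  have Eprod: "P.expectation (\<lambda>\<omega>. real (V \<omega>) * real (X i \<omega>)) = p * P.expectation (\<lambda>\<omega>. real (V \<omega>))"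
    if "i \<ge> 1" "V = S i \<or> V = C i" for i V
  proof -
    have Vm: "V \<in> measurable M (count_space UNIV)" using that meas by auto
    have V01: "V \<omega> \<in> {0,1}" if "\<omega> \<in> space M" for \<omega>
      using SC[OF \<open>i \<ge> 1\<close> that] C01[OF \<open>i \<ge> 1\<close> that] \<open>V = S i \<or> V = C i\<close> by auto
    have "P.prob ({\<omega>\<in>space M. V \<omega> = 1} \<inter> {\<omega>\<in>space M. X i \<omega> = 1})
       = P.prob {\<omega>\<in>space M. V \<omega> = 1} * P.prob {\<omega>\<in>space M. X i \<omega> = 1}"
      using P.indep_setD[OF Xindep[OF that(1)] Xev Hev[OF that(2)]] by (simp add: Int_commute mult.commute)
    then have "P.expectation (\<lambda>\<omega>. real (V \<omega>) * real (X i \<omega>))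
       = P.expectation (\<lambda>\<omega>. real (V \<omega>)) * P.expectation (\<lambda>\<omega>. real (X i \<omega>))"
      by (intro E_prod01[OF \<open>prob_space M\<close> Vm meas(2)]) (use V01 X01[OF that(1)] in auto)
    then show ?thesis using EX[OF that(1)] by simp
  qed
  have Cnn: "0 \<le> (\<Sum>i\<in>{1..int k}. 1 - real (C i \<omega>))" if "\<omega> \<in> space M" for k \<omega>
    using C01[OF _ that] by (intro sum_nonneg) force
  show ?thesis
  proof (cases "\<gamma> \<le> \<delta>")
    case True
    have "1/2 + \<delta> + (1 + \<delta>) * (1 - p) \<ge> \<gamma>" using True \<open>(1 + \<delta>) * (1 - p) \<ge> 0\<close> by linarith
    then have "g \<ge> 1" unfolding g_def using gam by simp
    then have t0: "t \<le> 0" using t_g p by simp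
    have "val k \<ge> t" for k
    proof -
      have "0 \<le> val k" unfolding val_def
        by (rule Bochner_Integration.integral_nonneg) (use Cnn in simp)
      then show ?thesis using t0 by simp
    qed
    then show ?thesis unfolding t_def[symmetric] val_def[symmetric]
      by (intro Liminf_bounded) auto
  next
    case False
    have Cpos: "Qr i \<omega> \<ge> 1" if "i \<ge> 1" "\<omega> \<in> space M" "C i \<omega> = 1" for i \<omega>
    proof -
      have "(- Qhat d p Qr S C i \<omega> + \<gamma>) * 1 \<le> 0"
        using C_pol[OF that(1,2)] that(3) by force
      then have "Qhat d p Qr S C i \<omega> \<ge> \<gamma>" by simp
      then have "real (Qr i \<omega>) > 0" using est[OF that(1,2)] False by linarith
      then show ?thesis by simp
    qed
    define F where "F i \<omega> = real (S i \<omega>) * real (X i \<omega>) - real (C i \<omega>) + real (C i \<omega>) * real (X i \<omega>)" for i \<omega>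
    have step: "real (Qr (i+1) \<omega>) = real (Qr i \<omega>) + F i \<omega>" if "i \<ge> 1" "\<omega> \<in> space M" for i \<omega>
    proof (cases "C i \<omega> = 1")
      case True
      then have "S i \<omega> = 0" using SC[OF that] by simp
      then show ?thesis using Qr_step[OF that] True Cpos[OF that True] X01[OF that] unfolding F_def
        by auto
    next
      case False
      then have "C i \<omega> = 0" using C01[OF that] by simp
      then show ?thesis using Qr_step[OF that] unfolding F_def by simp
    qed
    have tel: "real (Qr (1 + int K) \<omega>) = real (r0 1) + (\<Sum>i\<in>{1..int K}. F i \<omega>)" if "\<omega> \<in> space M" for K \<omega>
    proof (induction K)
      case 0
      then show ?case using init(2)[OF _ that, of 1] by simp
    next
      case (Suc K)
      have e: "{1..int (Suc K)} = insert (1 + int K) {1..int K}" by auto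
      have "real (Qr (1 + int (Suc K)) \<omega>) = real (Qr ((1 + int K) + 1) \<omega>)" by (simp add: add.commute)
      also have "\<dots> = real (Qr (1 + int K) \<omega>) + F (1 + int K) \<omega>" by (rule step) (use that in auto)
      finally show ?case using Suc e by simp
    qed
    have intF: "integrable M (F i)" if "i \<ge> 1" for i
      unfolding F_def[abs_def] using intSX[OF that] intC[OF that] intCX[OF that] by auto
    have EF: "P.expectation (F i) = p * P.expectation (\<lambda>\<omega>. real (S i \<omega>)) - (1 - p) * P.expectation (\<lambda>\<omega>. real (C i \<omega>))"
      if "i \<ge> 1" for i
    proof -
      have "P.expectation (F i) = P.expectation (\<lambda>\<omega>. real (S i \<omega>) * real (X i \<omega>))
          - P.expectation (\<lambda>\<omega>. real (C i \<omega>)) + P.expectation (\<lambda>\<omega>. real (C i \<omega>) * real (X i \<omega>))"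
        unfolding F_def[abs_def] using intSX[OF that] intC[OF that] intCX[OF that] by simp
      then show ?thesis using Eprod[OF that, of "S i"] Eprod[OF that, of "C i"] by (simp add: algebra_simps)
    qed
    have ESC: "P.expectation (\<lambda>\<omega>. real (S i \<omega>)) \<le> 1 - P.expectation (\<lambda>\<omega>. real (C i \<omega>))" if "i \<ge> 1" for i
    proof -
      have "P.expectation (\<lambda>\<omega>. real (S i \<omega>)) \<le> P.expectation (\<lambda>\<omega>. 1 - real (C i \<omega>))"
        by (rule Bochner_Integration.integral_mono) (use intS[OF that] intC[OF that] SC[OF that] in force)+
      then show ?thesis using intC[OF that] P.prob_space by simp
    qed
    have main: "val k \<ge> 1 - p - real (r0 1) / real k" if "k \<ge> 1" for k
    proof -
      have "- real (r0 1) \<le> P.expectation (\<lambda>\<omega>. \<Sum>i\<in>{1..int k}. F i \<omega>)"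
      proof -
        have tel_lb: "- real (r0 1) \<le> (\<Sum>i\<in>{1..int k}. F i \<omega>)" if "\<omega> \<in> space M" for \<omega>
          using tel[OF that, of k] of_nat_0_le_iff[of "Qr (1 + int k) \<omega>"] by linarith
        have "P.expectation (\<lambda>\<omega>. - real (r0 1)) \<le> P.expectation (\<lambda>\<omega>. \<Sum>i\<in>{1..int k}. F i \<omega>)"
          using tel_lb by (intro Bochner_Integration.integral_mono) (use intF in force)+
        then show ?thesis using P.prob_space by simp
      qed
      also have "\<dots> = (\<Sum>i\<in>{1..int k}. P.expectation (F i))"
        by (rule Bochner_Integration.integral_sum) (use intF in auto)
      also have "\<dots> \<le> (\<Sum>i\<in>{1..int k}. p - P.expectation (\<lambda>\<omega>. real (C i \<omega>)))"
      proof (rule sum_mono)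
        fix i assume "i \<in> {1..int k}"
        then have i: "i \<ge> 1" by simp
        show "P.expectation (F i) \<le> p - P.expectation (\<lambda>\<omega>. real (C i \<omega>))"
          using EF[OF i] ESC[OF i] p mult_left_mono[OF ESC[OF i], of p] by (simp add: algebra_simps)
      qed
      also have "\<dots> = real k * p - (\<Sum>i\<in>{1..int k}. P.expectation (\<lambda>\<omega>. real (C i \<omega>)))"
        by (simp add: sum_subtractf)
      finally have A: "(\<Sum>i\<in>{1..int k}. P.expectation (\<lambda>\<omega>. real (C i \<omega>))) \<le> real k * p + real (r0 1)" by simp
      have "val k = P.expectation (\<lambda>\<omega>. \<Sum>i\<in>{1..int k}. 1 - real (C i \<omega>)) / real k"
        unfolding val_def by simp
      also have "P.expectation (\<lambda>\<omega>. \<Sum>i\<in>{1..int k}. 1 - real (C i \<omega>))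
          = (\<Sum>i\<in>{1..int k}. 1 - P.expectation (\<lambda>\<omega>. real (C i \<omega>)))"
        using intC P.prob_space by (subst Bochner_Integration.integral_sum) auto
      also have "\<dots> = real k - (\<Sum>i\<in>{1..int k}. P.expectation (\<lambda>\<omega>. real (C i \<omega>)))"
        by (simp add: sum_subtractf)
      finally have "val k = (real k - (\<Sum>i\<in>{1..int k}. P.expectation (\<lambda>\<omega>. real (C i \<omega>)))) / real k" .
      also have "\<dots> \<ge> (real k - (real k * p + real (r0 1))) / real k"
        using A that by (intro divide_right_mono) auto
      finally show ?thesis using that by (simp add: diff_divide_distrib add_divide_distrib)
    qed
    obtain N :: nat where N: "real (r0 1) / g \<le> real N" using real_arch_simple by blast
    have "eventually (\<lambda>k. t \<le> val k) sequentially"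
      unfolding eventually_sequentially
    proof (intro exI allI impI)
      fix k assume k: "Suc N \<le> k"
      have "real (r0 1) \<le> g * real N" using N gpos by (simp add: divide_le_eq mult.commute)
      moreover have "g * real N \<le> g * real k" using k gpos by simp
      ultimately have "real (r0 1) \<le> g * real k" by linarith
      then have "real (r0 1) / real k \<le> g" using k by (simp add: divide_le_eq mult.commute)
      then show "t \<le> val k" using main[of k] k t_g by simp
    qed
    then show ?thesis unfolding t_def[symmetric] val_def[symmetric]
      by (intro Liminf_bounded) (auto elim: eventually_mono)
  qed
qed

end
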